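(* Let $A \in \mathbb{R}^{m \times n}$ and $b \in \mathbb{R}^m$ be such that $\mathcal{P} = \{x \in \mathbb{R}^n : Ax \geq b\}$ is a polytope. Let $G$ be a finite undirected graph whose vertices are pairs $u = (I, X)$ with $I \subset [m]$ and $X \in \mathbb{R}^{n \times (1+m)}$. Suppose that $G$ is nonempty and that for every vertex $u = (I,X)$ of $G$: (i) $\#I = n$; (ii) $A_I X = \tilde b_I$; (iii) $A X \geq_{\mathrm{lex}} \tilde b$; (iv) $u$ has exactly $n$ neighbors in $G$; (v) for every neighbor $u' = (I', X')$ of $u$ in $G$, $\#(I \cap I') = n-1$. Then the map $(I,X) \mapsto I$ is a graph isomorphism from $G$ onto the lex-graph $G_\mathrm{lex}$ of $(A,b)$.
   Context: Let $\tilde b := [\,b \;\; -\mathrm{Id}_m\,] \in \mathbb{R}^{m \times (1+m)}$. For row vectors $\alpha,\beta \in \mathbb{R}^{1+m}$, $\alpha \leq_{\mathrm{lex}} \beta$ means $\alpha = \beta$ or $\alpha_k < \beta_k$ at the first index $k$ where they differ; for matrices with $1+m$ columns, $X \geq_{\mathrm{lex}} Y$ means $X_i \geq_{\mathrm{lex}} Y_i$ for every row $i$. For $I \subset [m]$, $A_I$, $\tilde b_I$ are the submatrices of rows indexed by $I$. A lex-feasible basis is a set $I \subset [m]$ with $\#I = n$, $A_I$ nonsingular, and $X^I := A_I^{-1}\tilde b_I$ satisfying $A X^I \geq_{\mathrm{lex}} \tilde b$. The lex-graph $G_\mathrm{lex}$ has the lex-feasible bases as vertices, with an edge between $I$ and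 $I'$ iff $\#(I \cap I') = n-1$. *)

theory Defs
  imports "Jordan_Normal_Form.DL_Submatrix" "Jordan_Normal_Form.Determinant"
begin

text \<open>Matrices are Jordan_Normal_Form matrices; rows/columns are indexed from 0.
  A is m x n, b has length m, row indices [m] = {0..<m}.\<close>

text \<open>btilde = [b | -Id_m], an m x (1+m) matrix (column 0 is b).\<close>
definition btilde :: "real vec \<Rightarrow> real mat" where
  "btilde b = mat (dim_vec b) (1 + dim_vec b)
     (\<lambda>(i,k). if k = 0 then b $ i else if k = i + 1 then -1 else 0)"

definition lex_le :: "real vec \<Rightarrow> real vec \<Rightarrow> bool" where
  "lex_le \<alpha> \<beta> \<longleftrightarrow> \<alpha> = \<beta> \<or>
     (\<exists>k < dim_vec \<alpha>. (\<forall>j<k. \<alpha> $ j = \<beta> $ j) \<and> \<alpha> $ k < \<beta> $ k)"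

definition mat_lex_ge :: "real mat \<Rightarrow> real mat \<Rightarrow> bool" where
  "mat_lex_ge X Y \<longleftrightarrow> (\<forall>i < dim_row X. lex_le (row Y i) (row X i))"

definition rows_sub :: "'a mat \<Rightarrow> nat set \<Rightarrow> 'a mat" where
  "rows_sub M I = submatrix M I {..<dim_col M}"

text \<open>X^I := A_I^{-1} btilde_I, i.e. the unique n x (1+m) matrix X with A_I X = btilde_I.\<close>
definition basis_sol :: "real mat \<Rightarrow> real vec \<Rightarrow> nat set \<Rightarrow> real mat" where
  "basis_sol A b I = (THE X. X \<in> carrier_mat (dim_col A) (1 + dim_vec b) \<and>
       rows_sub A I * X = rows_sub (btilde b) I)"

definition lex_feasible_basis :: "real mat \<Rightarrow> real vec \<Rightarrow> nat set \<Rightarrow> bool" where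
  "lex_feasible_basis A b I \<longleftrightarrow>
     I \<subseteq> {..<dim_row A} \<and> card I = dim_col A \<and>
     det (rows_sub A I) \<noteq> 0 \<and>
     mat_lex_ge (A * basis_sol A b I) (btilde b)"

definition lex_vertices :: "real mat \<Rightarrow> real vec \<Rightarrow> nat set set" where
  "lex_vertices A b = {I. lex_feasible_basis A b I}"

definition lex_edges :: "real mat \<Rightarrow> real vec \<Rightarrow> (nat set \<times> nat set) set" where
  "lex_edges A b = {(I, I'). I \<in> lex_vertices A b \<and> I' \<in> lex_vertices A b \<and>
      int (card (I \<inter> I')) = int (dim_col A) - 1}"

definition polyhedron :: "real mat \<Rightarrow> real vec \<Rightarrow> real vec set" where
  "polyhedron A b = {x \<in> carrier_vec (dim_col A). \<forall>i < dim_row A. (A *\<^sub>v x) $ i \<ge> b $ i}"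

text \<open>A polyhedron is a polytope iff it is bounded.\<close>
definition is_polytope :: "real vec set \<Rightarrow> bool" where
  "is_polytope P \<longleftrightarrow> (\<exists>M. \<forall>x \<in> P. \<forall>j < dim_vec x. \<bar>x $ j\<bar> \<le> M)"

definition fin_undirected_graph :: "'v set \<Rightarrow> ('v \<times> 'v) set \<Rightarrow> bool" where
  "fin_undirected_graph V E \<longleftrightarrow> finite V \<and> E \<subseteq> V \<times> V \<and> sym E \<and> irrefl E"

definition graph_iso :: "('v \<Rightarrow> 'w) \<Rightarrow> 'v set \<Rightarrow> ('v \<times> 'v) set \<Rightarrow> 'w set \<Rightarrow> ('w \<times> 'w) set \<Rightarrow> bool" where
  "graph_iso f V E W F \<longleftrightarrow> bij_betw f V W \<and>
     (\<forall>u \<in> V. \<forall>v \<in> V. (u, v) \<in> E \<longleftrightarrow> (f u, f v) \<in> F)"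

end

theory Submission
  imports Defs
begin


definition lpos :: "nat \<Rightarrow> (nat \<Rightarrow> real) \<Rightarrow> bool" where
  "lpos N f \<longleftrightarrow> (\<exists>k<N. (\<forall>j<k. f j = 0) \<and> f k > 0)"

definition lnn :: "nat \<Rightarrow> (nat \<Rightarrow> real) \<Rightarrow> bool" where
  "lnn N f \<longleftrightarrow> (\<forall>j<N. f j = 0) \<or> lpos N f"

lemma lpos_nz: "lpos N f \<Longrightarrow> \<not> (\<forall>j<N. f j = 0)"
  unfolding lpos_def by force

lemma lpos_add: assumes "lpos N f" "lnn N g" shows "lpos N (\<lambda>c. f c + g c)"
proof -
  obtain k where k: "k<N" "\<forall>j<k. f j = 0" "f k > 0" using assms(1) unfolding lpos_def by blast
  show ?thesis
  proof (cases "\<forall>j<N. g j = 0")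
    case True then show ?thesis using k unfolding lpos_def by (intro exI[of _ k]) auto
  next
    case False
    then obtain k' where k': "k'<N" "\<forall>j<k'. g j = 0" "g k' > 0" using assms(2) unfolding lnn_def lpos_def by blast
    show ?thesis unfolding lpos_def
    proof (intro exI[of _ "min k k'"] conjI allI impI)
      show "min k k' < N" using k k' by simp
      fix j assume "j < min k k'" then show "f j + g j = 0" using k k' by simp
    next
      show "f (min k k') + g (min k k') > 0"
        using k k' by (cases "k < k'"; cases "k = k'"; simp add: min_def add_pos_nonneg add_nonneg_pos)
    qed
  qed
qed

lemma lnn_add: assumes "lnn N f" "lnn N g" shows "lnn N (\<lambda>c. f c + g c)"
proof (cases "\<forall>j<N. f j = 0")
  case True
  then have "lnn N (\<lambda>c. f c + g c) = lnn N g" unfolding lnn_def lpos_def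
    by (smt (verit) dual_order.strict_trans)
  then show ?thesis using assms by simp
next
  case False
  then have "lpos N f" using assms unfolding lnn_def by auto
  then show ?thesis using lpos_add assms unfolding lnn_def by blast
qed

lemma lpos_smult: "lpos N f \<Longrightarrow> t > 0 \<Longrightarrow> lpos N (\<lambda>c. t * f c)"
  unfolding lpos_def by auto

lemma lnn_smult: "lnn N f \<Longrightarrow> t \<ge> 0 \<Longrightarrow> lnn N (\<lambda>c. t * f c)"
  unfolding lnn_def using lpos_smult[of N f t]
  by (cases "t = 0") auto

lemma lnn_antisym: assumes "lnn N f" "lnn N (\<lambda>c. - f c)" shows "\<forall>j<N. f j = 0"
proof (rule ccontr)
  assume "\<not> ?thesis"
  then have "lpos N f" using assms(1) unfolding lnn_def by auto
  then have "lpos N (\<lambda>c. f c + - f c)" using lpos_add assms(2) by blast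
  then show False unfolding lpos_def by auto
qed

lemma lnn_total: "lnn N f \<or> lnn N (\<lambda>c. - f c)"
proof (cases "\<forall>j<N. f j = 0")
  case True then show ?thesis unfolding lnn_def by auto
next
  case False
  then obtain k where k: "k < N" "f k \<noteq> 0" by auto
  define k0 where "k0 = (LEAST k. k < N \<and> f k \<noteq> 0)"
  have k0: "k0 < N" "f k0 \<noteq> 0" using LeastI[of "\<lambda>k. k < N \<and> f k \<noteq> 0" k] k unfolding k0_def by auto
  have "\<forall>j<k0. f j = 0" using not_less_Least[of _ "\<lambda>k. k < N \<and> f k \<noteq> 0"] k0 unfolding k0_def
    by (meson order.strict_trans)
  then show ?thesis using k0 unfolding lnn_def lpos_def
    by (cases "f k0 > 0") (auto intro!: exI[of _ k0])
qed

lemma lnn_0: "lnn N f \<Longrightarrow> 0 < N \<Longrightarrow> f 0 \<ge> 0"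
  unfolding lnn_def lpos_def by (metis less_eq_real_def not_gr0)

lemma lnn_cong: "lnn N f \<Longrightarrow> (\<And>c. c < N \<Longrightarrow> f c = g c) \<Longrightarrow> lnn N g"
  unfolding lnn_def lpos_def by (metis order.strict_trans)

lemma lpos_cong: "lpos N f \<Longrightarrow> (\<And>c. c < N \<Longrightarrow> f c = g c) \<Longrightarrow> lpos N g"
  unfolding lpos_def by (metis order.strict_trans)

lemma lnn_sum: "finite S \<Longrightarrow> (\<And>s. s \<in> S \<Longrightarrow> lnn N (F s)) \<Longrightarrow> lnn N (\<lambda>c. \<Sum>s\<in>S. F s c)"
proof (induction S rule: finite_induct)
  case empty then show ?case unfolding lnn_def by simp
next
  case (insert x S)
  then have "lnn N (\<lambda>c. F x c + (\<Sum>s\<in>S. F s c))" using lnn_add by auto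
  then show ?case using insert by simp
qed

lemma lnn_sum_zero:
  assumes "finite S" "\<And>s. s \<in> S \<Longrightarrow> lnn N (F s)" "\<And>c. c < N \<Longrightarrow> (\<Sum>s\<in>S. F s c) = 0"
    "s0 \<in> S"
  shows "\<forall>c<N. F s0 c = 0"
proof (rule ccontr)
  assume "\<not> ?thesis"
  then have p: "lpos N (F s0)" using assms(2,4) unfolding lnn_def by auto
  have "lnn N (\<lambda>c. \<Sum>s\<in>S-{s0}. F s c)" using assms by (intro lnn_sum) auto
  then have "lpos N (\<lambda>c. F s0 c + (\<Sum>s\<in>S-{s0}. F s c))" using lpos_add p by blast
  moreover have "F s0 c + (\<Sum>s\<in>S-{s0}. F s c) = (\<Sum>s\<in>S. F s c)" for c
    using assms(1,4) by (simp add: sum.remove)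
  ultimately have "lpos N (\<lambda>c. \<Sum>s\<in>S. F s c)" by simp
  then show False using lpos_nz assms(3) by blast
qed



lemma pick_lessThan: "t < n \<Longrightarrow> pick {..<n} t = t"
proof (induction t)
  case 0 then show ?case by (auto intro!: Least_equality)
next
  case (Suc t) then show ?case by (auto intro!: Least_equality)
qed

lemma bij_pick: "finite I \<Longrightarrow> bij_betw (pick I) {..<card I} I"
proof (rule bij_betw_imageI)
  assume fI: "finite I"
  show "inj_on (pick I) {..<card I}"
  proof
    fix s t assume st: "s \<in> {..<card I}" "t \<in> {..<card I}" "pick I s = pick I t"
    have "card {a\<in>I. a < pick I s} = s" using card_pick_le[of s I] st(1) by (simp only: lessThan_iff)
    moreover have "card {a\<in>I. a < pick I t} = t" using card_pick_le[of t I] st(2) by (simp only: lessThan_iff)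
    ultimately show "s = t" using st(3) by metis
  qed
  show "pick I ` {..<card I} = I"
  proof
    show "pick I ` {..<card I} \<subseteq> I"
    proof
      fix x assume "x \<in> pick I ` {..<card I}"
      then obtain s where s: "s < card I" "x = pick I s" by auto
      then show "x \<in> I" using pick_in_set_le[OF s(1)] by (simp only:)
    qed
    show "I \<subseteq> pick I ` {..<card I}"
    proof
      fix i assume i: "i \<in> I"
      have "{a\<in>I. a < i} \<subset> I" using i by auto
      then have "card {a\<in>I. a < i} < card I" by (rule psubset_card_mono[OF fI])
      then show "i \<in> pick I ` {..<card I}" by (intro image_eqI[where f="pick I", OF pick_card_in_set[OF i, symmetric]]) (simp only: lessThan_iff)
    qed
  qed
qed

lemma card_sub: "I \<subseteq> {..<m} \<Longrightarrow> card {i. i < m \<and> i \<in> I} = card I"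
proof -
  assume "I \<subseteq> {..<m}"
  then have "{i. i < m \<and> i \<in> I} = I" by blast
  then show ?thesis by (simp only:)
qed
lemma psub_less: "i \<in> I \<Longrightarrow> {a\<in>I. a < (i::nat)} \<subset> I" by auto
locale setting =
  fixes A :: "real mat" and b :: "real vec" and m n :: nat
  assumes A: "A \<in> carrier_mat m n" and b: "b \<in> carrier_vec m"
begin

definition ax :: "real mat \<Rightarrow> nat \<Rightarrow> nat \<Rightarrow> real" where
  "ax X k c = (\<Sum>r<n. A $$ (k,r) * X $$ (r,c))"
definition Bt :: "nat \<Rightarrow> nat \<Rightarrow> real" where
  "Bt k c = (if c = 0 then b $ k else if c = Suc k then -1 else 0)"
definition res :: "real mat \<Rightarrow> nat \<Rightarrow> nat \<Rightarrow> real" where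
  "res X k c = ax X k c - Bt k c"
definition tight :: "nat set \<Rightarrow> real mat \<Rightarrow> bool" where
  "tight I X \<longleftrightarrow> (\<forall>k\<in>I. \<forall>c<Suc m. res X k c = 0)"
definition lfeas :: "real mat \<Rightarrow> bool" where
  "lfeas X \<longleftrightarrow> (\<forall>k<m. lnn (Suc m) (res X k))"
definition basis :: "nat set \<Rightarrow> real mat \<Rightarrow> bool" where
  "basis I X \<longleftrightarrow> I \<subseteq> {..<m} \<and> card I = n \<and> X \<in> carrier_mat n (Suc m) \<and> tight I X \<and> lfeas X"
definition dir :: "real mat \<Rightarrow> nat \<Rightarrow> nat \<Rightarrow> real" where
  "dir X i r = - X $$ (r, Suc i)"
definition dot :: "nat \<Rightarrow> (nat \<Rightarrow> real) \<Rightarrow> real" where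
  "dot k d = (\<Sum>r<n. A $$ (k,r) * d r)"

lemma dimA[simp]: "dim_row A = m" "dim_col A = n" using A by auto
lemma dimb[simp]: "dim_vec b = m" using b by auto

lemma btilde_carrier: "btilde b \<in> carrier_mat m (Suc m)"
  unfolding btilde_def by simp
lemma btilde_idx: "k < m \<Longrightarrow> c < Suc m \<Longrightarrow> btilde b $$ (k,c) = Bt k c"
  unfolding btilde_def Bt_def by simp
lemma btilde_dim[simp]: "dim_row (btilde b) = m" "dim_col (btilde b) = Suc m"
  using btilde_carrier by auto

lemma AX_idx: "X \<in> carrier_mat n N' \<Longrightarrow> k < m \<Longrightarrow> c < N' \<Longrightarrow> (A * X) $$ (k,c) = ax X k c"
  unfolding ax_def by (auto simp: scalar_prod_def atLeast0LessThan intro!: sum.cong)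

lemma rows_subA: assumes "I \<subseteq> {..<m}"
  shows "rows_sub A I \<in> carrier_mat (card I) n"
    "\<And>s t. s < card I \<Longrightarrow> t < n \<Longrightarrow> rows_sub A I $$ (s,t) = A $$ (pick I s, t)"
  unfolding rows_sub_def submatrix_def using card_sub[OF assms] pick_lessThan
  by (auto simp: card_sub[OF assms])

lemma rows_subB: assumes "I \<subseteq> {..<m}"
  shows "rows_sub (btilde b) I \<in> carrier_mat (card I) (Suc m)"
    "\<And>s t. s < card I \<Longrightarrow> t < Suc m \<Longrightarrow> rows_sub (btilde b) I $$ (s,t) = btilde b $$ (pick I s, t)"
  unfolding rows_sub_def submatrix_def using card_sub[OF assms] pick_lessThan
  by (auto simp: card_sub[OF assms])

lemma E1: assumes I: "I \<subseteq> {..<m}" and X: "X \<in> carrier_mat n (Suc m)"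
  shows "rows_sub A I * X = rows_sub (btilde b) I \<longleftrightarrow> tight I X"
proof -
  have fI: "finite I" using I finite_subset by blast
  have pI: "\<And>s. s < card I \<Longrightarrow> pick I s \<in> I" using pick_in_set_le by blast
  have L: "(rows_sub A I * X) $$ (s,c) = ax X (pick I s) c" if "s < card I" "c < Suc m" for s c
  proof -
    have "(rows_sub A I * X) $$ (s,c) = row (rows_sub A I) s \<bullet> col X c"
      using that rows_subA[OF I] X by auto
    also have "\<dots> = ax X (pick I s) c" unfolding ax_def scalar_prod_def
      using that rows_subA[OF I] X by (auto simp: atLeast0LessThan intro!: sum.cong)
    finally show ?thesis .
  qed
  have R: "rows_sub (btilde b) I $$ (s,c) = Bt (pick I s) c" if "s < card I" "c < Suc m" for s c
    using rows_subB(2)[OF I that] btilde_idx pI[OF that(1)] I that by auto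
  show ?thesis
  proof
    assume eq: "rows_sub A I * X = rows_sub (btilde b) I"
    show "tight I X" unfolding tight_def res_def
    proof (intro ballI allI impI)
      fix k c assume k: "k \<in> I" and c: "c < Suc m"
      define s where "s = card {a\<in>I. a < k}"
      have s: "s < card I" unfolding s_def using psubset_card_mono[OF fI psub_less[OF k]] .
      have ps: "pick I s = k" unfolding s_def using pick_card_in_set[OF k] .
      show "ax X k c - Bt k c = 0" using L[OF s c] R[OF s c] eq ps by simp
    qed
  next
    assume t: "tight I X"
    show "rows_sub A I * X = rows_sub (btilde b) I"
    proof (rule eq_matI)
      fix s c assume "s < dim_row (rows_sub (btilde b) I)" "c < dim_col (rows_sub (btilde b) I)"
      then have s: "s < card I" and c: "c < Suc m" using rows_subB[OF I] by auto
      show "(rows_sub A I * X) $$ (s,c) = rows_sub (btilde b) I $$ (s,c)"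
        using L[OF s c] R[OF s c] t pI[OF s] c unfolding tight_def res_def by auto
    qed (use rows_subA[OF I] rows_subB[OF I] X in auto)
  qed
qed

lemma E2: assumes X: "X \<in> carrier_mat n (Suc m)"
  shows "mat_lex_ge (A * X) (btilde b) \<longleftrightarrow> lfeas X"
proof -
  have "lex_le (row (btilde b) k) (row (A * X) k) \<longleftrightarrow> lnn (Suc m) (res X k)" if k: "k < m" for k
  proof -
    have r1: "row (btilde b) k $ c = Bt k c" if "c < Suc m" for c using btilde_idx k that by simp
    have r2: "row (A*X) k $ c = ax X k c" if "c < Suc m" for c using AX_idx[OF X] k that X by simp
    have d: "dim_vec (row (btilde b) k) = Suc m" "dim_vec (row (A*X) k) = Suc m" using X by auto
    have eq: "row (btilde b) k = row (A * X) k \<longleftrightarrow> (\<forall>c<Suc m. res X k c = 0)"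
      unfolding vec_eq_iff d res_def using r1 r2 by auto
    have c: "((\<forall>j<c. row (btilde b) k $ j = row (A * X) k $ j) \<and> row (btilde b) k $ c < row (A * X) k $ c)
      \<longleftrightarrow> ((\<forall>j<c. res X k j = 0) \<and> res X k c > 0)" if "c < Suc m" for c
      using r1 r2 that unfolding res_def by auto
    have "lex_le (row (btilde b) k) (row (A * X) k) \<longleftrightarrow> (\<forall>c<Suc m. res X k c = 0) \<or>
       (\<exists>c<Suc m. (\<forall>j<c. res X k j = 0) \<and> res X k c > 0)"
      unfolding lex_le_def eq d using c by blast
    then show ?thesis unfolding lnn_def lpos_def .
  qed
  then show ?thesis unfolding mat_lex_ge_def lfeas_def using X by simp
qed


lemma dot_dir: "dot k (dir X i) = - ax X k (Suc i)"
  unfolding dot_def dir_def ax_def by (simp add: sum_negf)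

lemma core:
  assumes I: "I \<subseteq> {..<m}" and cI: "card I = n" and X: "X \<in> carrier_mat n (Suc m)" and t: "tight I X"
  shows core1: "\<And>k i. k \<in> I \<Longrightarrow> i \<in> I \<Longrightarrow> dot k (dir X i) = (if k = i then 1 else 0)"
    and core2: "det (rows_sub A I) \<noteq> 0"
    and core3: "\<And>r r'. r < n \<Longrightarrow> r' < n \<Longrightarrow> (\<Sum>i\<in>I. dir X i r * A $$ (i,r')) = (if r = r' then 1 else 0)"
proof -
  have fI: "finite I" using I finite_subset by blast
  show c1: "dot k (dir X i) = (if k = i then 1 else 0)" if k: "k \<in> I" and i: "i \<in> I" for k i
  proof -
    have "i < m" using i I by auto
    then have "res X k (Suc i) = 0" using t k unfolding tight_def by auto
    then have "ax X k (Suc i) = Bt k (Suc i)" unfolding res_def by simp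
    then show ?thesis unfolding dot_dir Bt_def by auto
  qed
  define M where "M = rows_sub A I"
  define D where "D = mat n n (\<lambda>(r,t). dir X (pick I t) r)"
  have M: "M \<in> carrier_mat n n" unfolding M_def using rows_subA(1)[OF I] cI by simp
  have Mi: "M $$ (s,t) = A $$ (pick I s, t)" if "s < n" "t < n" for s t
    unfolding M_def using rows_subA(2)[OF I] that cI by simp
  have D: "D \<in> carrier_mat n n" unfolding D_def by simp
  have pI: "pick I s \<in> I" if "s < n" for s using pick_in_set_le[of s I] that cI by simp
  have bij: "bij_betw (pick I) {..<n} I" using bij_pick[OF fI] cI by simp
  then have inj: "inj_on (pick I) {..<n}" by (rule bij_betw_imp_inj_on)
  have MD: "M * D = 1\<^sub>m n"
  proof (rule eq_matI)
    fix s t assume st: "s < dim_row (1\<^sub>m n)" "t < dim_col (1\<^sub>m n)"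
    then have s: "s < n" and tt: "t < n" by auto
    have "(M * D) $$ (s,t) = (\<Sum>r<n. M $$ (s,r) * D $$ (r,t))"
      using M D s tt by (simp add: scalar_prod_def atLeast0LessThan)
    also have "\<dots> = (\<Sum>r<n. A $$ (pick I s, r) * dir X (pick I t) r)"
      using Mi s tt unfolding D_def by (intro sum.cong) auto
    also have "\<dots> = dot (pick I s) (dir X (pick I t))" unfolding dot_def ..
    also have "\<dots> = (if pick I s = pick I t then 1 else 0)" using c1 pI s tt by simp
    also have "\<dots> = (if s = t then 1 else 0)" using inj s tt unfolding inj_on_def by auto
    also have "\<dots> = 1\<^sub>m n $$ (s,t)" using s tt by simp
    finally show "(M * D) $$ (s,t) = 1\<^sub>m n $$ (s,t)" .
  qed (use M D in auto)
  have "det M * det D = 1" using det_mult[OF M D] MD by simp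
  then show "det (rows_sub A I) \<noteq> 0" unfolding M_def by auto
  have DM: "D * M = 1\<^sub>m n" using mat_mult_left_right_inverse[OF M D MD] .
  show "(\<Sum>i\<in>I. dir X i r * A $$ (i,r')) = (if r = r' then 1 else 0)" if r: "r < n" "r' < n" for r r'
  proof -
    have "(\<Sum>i\<in>I. dir X i r * A $$ (i,r')) = (\<Sum>t<n. dir X (pick I t) r * A $$ (pick I t,r'))"
      using sum.reindex_bij_betw[OF bij, of "\<lambda>i. dir X i r * A $$ (i,r')"] by simp
    also have "\<dots> = (\<Sum>t<n. D $$ (r,t) * M $$ (t,r'))"
      using Mi r unfolding D_def by (intro sum.cong) auto
    also have "\<dots> = (D * M) $$ (r,r')"
      using M D r by (simp add: scalar_prod_def atLeast0LessThan)
    also have "\<dots> = (if r = r' then 1 else 0)" using DM r by simp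
    finally show ?thesis .
  qed
qed

end
context setting begin

definition tb :: "nat set \<Rightarrow> real mat \<Rightarrow> bool" where
  "tb I X \<longleftrightarrow> I \<subseteq> {..<m} \<and> card I = n \<and> X \<in> carrier_mat n (Suc m) \<and> tight I X"

lemma basis_tb: "basis I X \<Longrightarrow> tb I X" unfolding basis_def tb_def by auto

lemma REP: assumes "tb I X" and Y: "Y \<in> carrier_mat n N'" and r: "r < n" and c: "c < N'"
  shows "Y $$ (r,c) = (\<Sum>i\<in>I. dir X i r * ax Y i c)"
proof -
  have "(\<Sum>i\<in>I. dir X i r * ax Y i c) = (\<Sum>i\<in>I. \<Sum>r'<n. dir X i r * A $$ (i,r') * Y $$ (r',c))"
    unfolding ax_def by (simp add: sum_distrib_left mult.assoc)
  also have "\<dots> = (\<Sum>r'<n. \<Sum>i\<in>I. dir X i r * A $$ (i,r') * Y $$ (r',c))" by (rule sum.swap)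
  also have "\<dots> = (\<Sum>r'<n. (\<Sum>i\<in>I. dir X i r * A $$ (i,r')) * Y $$ (r',c))"
    by (simp add: sum_distrib_right)
  also have "\<dots> = (\<Sum>r'<n. (if r = r' then 1 else 0) * Y $$ (r',c))"
    using core3[of I X r] assms(1) r unfolding tb_def by (intro sum.cong) auto
  also have "\<dots> = (\<Sum>r'<n. if r = r' then Y $$ (r',c) else 0)" by (intro sum.cong) auto
  also have "\<dots> = Y $$ (r,c)" using r by simp
  finally show ?thesis by simp
qed

lemma UNIQ: assumes "tb I X" and Y: "Y \<in> carrier_mat n N'" and Z: "Z \<in> carrier_mat n N'"
  and eq: "\<And>k c. k \<in> I \<Longrightarrow> c < N' \<Longrightarrow> ax Y k c = ax Z k c"
  shows "Y = Z"
proof (rule eq_matI)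
  fix r c assume "r < dim_row Z" "c < dim_col Z"
  then have r: "r < n" and c: "c < N'" using Z by auto
  show "Y $$ (r,c) = Z $$ (r,c)" using REP[OF assms(1) Y r c] REP[OF assms(1) Z r c] eq c by simp
qed (use Y Z in auto)

lemma tb_ax: "tb I X \<Longrightarrow> k \<in> I \<Longrightarrow> c < Suc m \<Longrightarrow> ax X k c = Bt k c"
  unfolding tb_def tight_def res_def by auto

lemma zerocol: assumes "tb I X" "j < m" "j \<notin> I" "r < n"
  shows "X $$ (r, Suc j) = 0"
proof -
  have X: "X \<in> carrier_mat n (Suc m)" using assms(1) unfolding tb_def by auto
  have "X $$ (r, Suc j) = (\<Sum>i\<in>I. dir X i r * ax X i (Suc j))" using REP[OF assms(1) X assms(4)] assms(2) by simp
  also have "\<dots> = (\<Sum>i\<in>I. dir X i r * 0)"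
    using tb_ax[OF assms(1)] assms(2,3) unfolding Bt_def by (intro sum.cong) auto
  finally show ?thesis by simp
qed

lemma ax_zero: assumes "tb I X" "j < m" "j \<notin> I" shows "ax X k (Suc j) = 0"
  unfolding ax_def using zerocol[OF assms] by simp

lemma res_jj: assumes "tb I X" "j < m" "j \<notin> I" shows "res X j (Suc j) = 1"
  unfolding res_def ax_zero[OF assms] Bt_def by simp

lemma res_kj: assumes "tb I X" "j < m" "j \<notin> I" "k \<noteq> j" shows "res X k (Suc j) = 0"
  unfolding res_def ax_zero[OF assms(1-3)] Bt_def using assms(4) by simp

lemma sol_eq: assumes "tb I X" shows "basis_sol A b I = X"
proof -
  have I: "I \<subseteq> {..<m}" and X: "X \<in> carrier_mat n (Suc m)" and t: "tight I X"
    using assms unfolding tb_def by auto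
  show ?thesis unfolding basis_sol_def
  proof (rule the_equality)
    show "X \<in> carrier_mat (dim_col A) (1 + dim_vec b) \<and> rows_sub A I * X = rows_sub (btilde b) I"
      using X E1[OF I X] t by simp
    fix Y assume "Y \<in> carrier_mat (dim_col A) (1 + dim_vec b) \<and> rows_sub A I * Y = rows_sub (btilde b) I"
    then have Y: "Y \<in> carrier_mat n (Suc m)" and tY: "tight I Y" using E1[OF I] by auto
    show "Y = X"
    proof (rule UNIQ[OF assms Y X])
      fix k c assume "k \<in> I" "c < Suc m"
      then show "ax Y k c = ax X k c" using tY t unfolding tight_def res_def by auto
    qed
  qed
qed

lemma LF: assumes "basis I X" shows "lex_feasible_basis A b I" "basis_sol A b I = X"
proof -
  have tb: "tb I X" using basis_tb[OF assms] .
  show sol: "basis_sol A b I = X" using sol_eq[OF tb] .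
  have X: "X \<in> carrier_mat n (Suc m)" using assms unfolding basis_def by auto
  show "lex_feasible_basis A b I" unfolding lex_feasible_basis_def sol
    using assms core2[of I X] E2[OF X] unfolding basis_def by auto
qed

lemma LF': assumes lf: "lex_feasible_basis A b I" shows "basis I (basis_sol A b I)"
proof -
  have I: "I \<subseteq> {..<m}" and cI: "card I = n" and dM: "det (rows_sub A I) \<noteq> 0"
    using lf unfolding lex_feasible_basis_def by auto
  have M: "rows_sub A I \<in> carrier_mat n n" using rows_subA(1)[OF I] cI by simp
  from det_non_zero_imp_unit[OF M dM, of "()"]
  obtain B where BM: "B * rows_sub A I = 1\<^sub>m n" and B: "B \<in> carrier_mat n n"
    unfolding Units_def ring_mat_def by auto
  have MB: "rows_sub A I * B = 1\<^sub>m n" using mat_mult_left_right_inverse[OF B M BM] .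
  define X where "X = B * rows_sub (btilde b) I"
  have Bt: "rows_sub (btilde b) I \<in> carrier_mat n (Suc m)" using rows_subB(1)[OF I] cI by simp
  have X: "X \<in> carrier_mat n (Suc m)" unfolding X_def using B Bt by simp
  have "rows_sub A I * X = (rows_sub A I * B) * rows_sub (btilde b) I"
    unfolding X_def using assoc_mult_mat[OF M B Bt] by simp
  also have "\<dots> = rows_sub (btilde b) I" unfolding MB using Bt by simp
  finally have "tight I X" using E1[OF I X] by simp
  then have tb: "tb I X" unfolding tb_def using I cI X by simp
  have sol: "basis_sol A b I = X" using sol_eq[OF tb] .
  show ?thesis unfolding sol basis_def using tb E2[OF X] lf
    unfolding tb_def lex_feasible_basis_def sol by auto
qed

end
context setting begin

definition piv :: "real mat \<Rightarrow> (nat \<Rightarrow> real) \<Rightarrow> (nat \<Rightarrow> real) \<Rightarrow> real mat" where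
  "piv X d \<theta> = mat n (Suc m) (\<lambda>(r,c). X $$ (r,c) + d r * \<theta> c)"

lemma piv_carrier: "piv X d \<theta> \<in> carrier_mat n (Suc m)" unfolding piv_def by simp

lemma ax_piv: "c < Suc m \<Longrightarrow> ax (piv X d \<theta>) k c = ax X k c + dot k d * \<theta> c"
  unfolding ax_def dot_def piv_def
  by (simp add: algebra_simps sum.distrib sum_distrib_left)

lemma res_piv: "c < Suc m \<Longrightarrow> res (piv X d \<theta>) k c = res X k c + dot k d * \<theta> c"
  unfolding res_def using ax_piv by simp

lemma PIVREP: assumes bI: "basis I X" and i: "i \<in> I" and b1: "basis I1 X1" and sub: "I - {i} \<subseteq> I1"
  shows "X1 = piv X (dir X i) (res X1 i)"
proof -
  have tb: "tb I X" using basis_tb[OF bI] .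
  have tb1: "tb I1 X1" using basis_tb[OF b1] .
  have X1: "X1 \<in> carrier_mat n (Suc m)" using b1 unfolding basis_def by auto
  show ?thesis
  proof (rule UNIQ[OF tb X1 piv_carrier])
    fix k c assume k: "k \<in> I" and c: "c < Suc m"
    show "ax X1 k c = ax (piv X (dir X i) (res X1 i)) k c"
    proof (cases "k = i")
      case True
      then show ?thesis unfolding ax_piv[OF c] using core1[of I X k i] tb k i tb_ax[OF tb k c]
        unfolding tb_def res_def by simp
    next
      case False
      then have "k \<in> I1" using sub k by auto
      then show ?thesis unfolding ax_piv[OF c] using core1[of I X k i] tb k i tb_ax[OF tb k c]
          tb_ax[OF tb1 _ c] False unfolding tb_def by simp
    qed
  qed
qed

lemma DEGU: assumes bI: "basis I X" and i: "i \<in> I" and j: "j < m" "j \<notin> I" and k: "k < m" "k \<notin> I"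
  and jk: "j \<noteq> k"
  and b1: "basis (insert j (I - {i})) X1" and b2: "basis (insert k (I - {i})) X2"
  shows False
proof -
  let ?N = "Suc m"
  define d where "d = dir X i"
  define \<theta>1 where "\<theta>1 = res X1 i"
  define \<theta>2 where "\<theta>2 = res X2 i"
  define \<alpha> where "\<alpha> = dot j d"
  define \<beta> where "\<beta> = dot k d"
  have tb: "tb I X" using basis_tb[OF bI] .
  have X1: "X1 = piv X d \<theta>1" unfolding d_def \<theta>1_def by (rule PIVREP[OF bI i b1]) auto
  have X2: "X2 = piv X d \<theta>2" unfolding d_def \<theta>2_def by (rule PIVREP[OF bI i b2]) auto
  have im: "i < m" using i bI unfolding basis_def by auto
  have th1: "lnn ?N \<theta>1" using b1 im unfolding basis_def lfeas_def \<theta>1_def by auto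
  have th2: "lnn ?N \<theta>2" using b2 im unfolding basis_def lfeas_def \<theta>2_def by auto
  have lX: "lnn ?N (res X kk)" if "kk < m" for kk using bI that unfolding basis_def lfeas_def by auto
  have P1: "res X j c + \<alpha> * \<theta>1 c = 0" if "c < ?N" for c
    using b1 that res_piv[OF that, of X d \<theta>1 j] unfolding X1 basis_def tight_def \<alpha>_def by auto
  have P2: "res X k c + \<beta> * \<theta>2 c = 0" if "c < ?N" for c
    using b2 that res_piv[OF that, of X d \<theta>2 k] unfolding X2 basis_def tight_def \<beta>_def by auto
  have P3: "lnn ?N (\<lambda>c. res X k c + \<beta> * \<theta>1 c)"
    using b1 k res_piv[of _ X d \<theta>1 k] unfolding X1 basis_def lfeas_def \<beta>_def
    by (auto elim!: lnn_cong)
  have P4: "lnn ?N (\<lambda>c. res X j c + \<alpha> * \<theta>2 c)"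
    using b2 j res_piv[of _ X d \<theta>2 j] unfolding X2 basis_def lfeas_def \<alpha>_def
    by (auto elim!: lnn_cong)
  have rjj: "res X j (Suc j) = 1" using res_jj[OF tb j] .
  have rkj: "res X k (Suc j) = 0" using res_kj[OF tb j] jk by simp
  have rkk: "res X k (Suc k) = 1" using res_jj[OF tb k] .
  have a: "\<alpha> < 0"
  proof (rule ccontr)
    assume "\<not> \<alpha> < 0"
    then have "lnn ?N (\<lambda>c. \<alpha> * \<theta>1 c)" using lnn_smult[OF th1] by simp
    then have "lnn ?N (\<lambda>c. - res X j c)" by (rule lnn_cong) (use P1 in \<open>simp add: eq_neg_iff_add_eq_0 add.commute\<close>)
    then have "\<forall>c<?N. res X j c = 0" using lnn_antisym lX j by blast
    then show False using rjj j by auto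
  qed
  have bb: "\<beta> < 0"
  proof (rule ccontr)
    assume "\<not> \<beta> < 0"
    then have "lnn ?N (\<lambda>c. \<beta> * \<theta>2 c)" using lnn_smult[OF th2] by simp
    then have "lnn ?N (\<lambda>c. - res X k c)" by (rule lnn_cong) (use P2 in \<open>simp add: eq_neg_iff_add_eq_0 add.commute\<close>)
    then have "\<forall>c<?N. res X k c = 0" using lnn_antisym lX k by blast
    then show False using rkk k by auto
  qed
  have "lnn ?N (\<lambda>c. (-1/\<beta>) * (res X k c + \<beta> * \<theta>1 c))" by (rule lnn_smult[OF P3]) (use bb in simp)
  then have Q1: "lnn ?N (\<lambda>c. \<theta>2 c - \<theta>1 c)"
  proof (rule lnn_cong)
    fix c assume c: "c < ?N"
    have "res X k c = - \<beta> * \<theta>2 c" using P2[OF c] by linarith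
    then show "(-1/\<beta>) * (res X k c + \<beta> * \<theta>1 c) = \<theta>2 c - \<theta>1 c" using bb by (simp add: field_simps)
  qed
  have "lnn ?N (\<lambda>c. (-1/\<alpha>) * (res X j c + \<alpha> * \<theta>2 c))" by (rule lnn_smult[OF P4]) (use a in simp)
  then have Q2: "lnn ?N (\<lambda>c. - (\<theta>2 c - \<theta>1 c))"
  proof (rule lnn_cong)
    fix c assume c: "c < ?N"
    have "res X j c = - \<alpha> * \<theta>1 c" using P1[OF c] by linarith
    then show "(-1/\<alpha>) * (res X j c + \<alpha> * \<theta>2 c) = - (\<theta>2 c - \<theta>1 c)" using a by (simp add: field_simps)
  qed
  have eq: "\<forall>c<?N. \<theta>2 c - \<theta>1 c = 0" using lnn_antisym[OF Q1 Q2] .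
  have sj: "Suc j < ?N" using j by simp
  have "\<beta> * \<theta>2 (Suc j) = 0" using P2[OF sj] rkj by simp
  then have "\<theta>2 (Suc j) = 0" using bb by simp
  then have "\<theta>1 (Suc j) = 0" using eq sj by auto
  then show False using P1[OF sj] rjj by simp
qed

end
lemma lex_min_exists:
  assumes "finite S" "S \<noteq> {}"
  shows "\<exists>j\<in>S. \<forall>k\<in>S. lnn N (\<lambda>c. f k c - f j c)"
  using assms
proof (induction S rule: finite_ne_induct)
  case (singleton x) then show ?case unfolding lnn_def by simp
next
  case (insert x S)
  then obtain j where j: "j \<in> S" "\<forall>k\<in>S. lnn N (\<lambda>c. f k c - f j c)" by blast
  show ?case
  proof (cases "lnn N (\<lambda>c. f x c - f j c)")
    case True
    then show ?thesis using j by auto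
  next
    case False
    then have xj: "lnn N (\<lambda>c. - (f x c - f j c))" using lnn_total by blast
    have "lnn N (\<lambda>c. f k c - f x c)" if "k \<in> insert x S" for k
    proof (cases "k = x")
      case True then show ?thesis unfolding lnn_def by simp
    next
      case False
      have a: "lnn N (\<lambda>c. f k c - f j c)" using that j False by auto
      have "lnn N (\<lambda>c. (f k c - f j c) + - (f x c - f j c))" by (rule lnn_add[OF a xj])
      then show ?thesis by (rule lnn_cong) simp
    qed
    then show ?thesis by blast
  qed
qed

context setting begin

lemma NB: assumes lf: "lex_feasible_basis A b I" and e: "(I, I') \<in> lex_edges A b"
  shows "\<exists>i j. i \<in> I \<and> j \<notin> I \<and> j < m \<and> I' = insert j (I - {i}) \<and> I - I' = {i}"
proof -
  have lf': "lex_feasible_basis A b I'" using e unfolding lex_edges_def lex_vertices_def by auto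
  have I: "I \<subseteq> {..<m}" "card I = n" and I': "I' \<subseteq> {..<m}" "card I' = n"
    using lf lf' unfolding lex_feasible_basis_def by auto
  have ci: "int (card (I \<inter> I')) = int n - 1" using e unfolding lex_edges_def by auto
  have fI: "finite I" "finite I'" using I I' finite_subset by auto
  have c1: "card (I - I') = 1" using card_Diff_subset_Int[of I I'] fI ci I by simp
  have c2: "card (I' - I) = 1" using card_Diff_subset_Int[of I' I] fI ci I' by (simp add: Int_commute)
  obtain i where i: "I - I' = {i}" using c1 card_1_singletonE by blast
  obtain j where j: "I' - I = {j}" using c2 card_1_singletonE by blast
  have "I' = (I \<inter> I') \<union> (I' - I)" by blast
  also have "I \<inter> I' = I - {i}" using i by blast
  finally have "I' = insert j (I - {i})" using j by auto
  moreover have "i \<in> I" "j \<notin> I" "j < m" using i j I' by auto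
  ultimately show ?thesis using i by blast
qed

lemma DEG: assumes lf: "lex_feasible_basis A b I"
  shows "card {I'. (I, I') \<in> lex_edges A b} \<le> n"
proof -
  let ?S = "{I'. (I, I') \<in> lex_edges A b}"
  define g where "g I' = the_elem (I - I')" for I'
  have I: "I \<subseteq> {..<m}" "card I = n" using lf unfolding lex_feasible_basis_def by auto
  have fI: "finite I" using I finite_subset by auto
  have bI: "basis I (basis_sol A b I)" using LF'[OF lf] .
  have "inj_on g ?S"
  proof
    fix I1 I2 assume "I1 \<in> ?S" "I2 \<in> ?S" and g: "g I1 = g I2"
    then have e1: "(I, I1) \<in> lex_edges A b" and e2: "(I, I2) \<in> lex_edges A b" by auto
    obtain i j where ij: "i \<in> I" "j \<notin> I" "j < m" "I1 = insert j (I - {i})" "I - I1 = {i}"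
      using NB[OF lf e1] by blast
    obtain i' k where ik: "i' \<in> I" "k \<notin> I" "k < m" "I2 = insert k (I - {i'})" "I - I2 = {i'}"
      using NB[OF lf e2] by blast
    have "i = i'" using g ij(5) ik(5) unfolding g_def by simp
    show "I1 = I2"
    proof (cases "j = k")
      case True then show ?thesis using ij ik \<open>i = i'\<close> by simp
    next
      case False
      have l1: "lex_feasible_basis A b I1" and l2: "lex_feasible_basis A b I2"
        using e1 e2 unfolding lex_edges_def lex_vertices_def by auto
      show ?thesis using DEGU[OF bI ij(1) ij(3,2) ik(3,2) False] LF'[OF l1] LF'[OF l2]
        ij(4) ik(4) \<open>i = i'\<close> by blast
    qed
  qed
  moreover have "g ` ?S \<subseteq> I"
  proof
    fix x assume "x \<in> g ` ?S"
    then obtain I1 where "(I, I1) \<in> lex_edges A b" "x = g I1" by auto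
    then show "x \<in> I" using NB[OF lf] unfolding g_def by fastforce
  qed
  ultimately have "card ?S \<le> card I" using card_inj_on_le fI by blast
  then show ?thesis using I by simp
qed

end
context setting begin

lemma BND: assumes poly: "is_polytope (polyhedron A b)" and bI: "basis I X"
  and nn: "\<And>k. k < m \<Longrightarrow> dot k d \<ge> 0" and r: "r < n" and dr: "d r \<noteq> 0"
  shows False
proof -
  obtain M where M: "\<And>x j. x \<in> polyhedron A b \<Longrightarrow> j < dim_vec x \<Longrightarrow> \<bar>x $ j\<bar> \<le> M"
    using poly unfolding is_polytope_def by blast
  define x where "x t = vec n (\<lambda>r. X $$ (r,0) + t * d r)" for t
  have inP: "x t \<in> polyhedron A b" if t: "t \<ge> 0" for t
    unfolding polyhedron_def
  proof (intro CollectI conjI allI impI)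
    show "x t \<in> carrier_vec (dim_col A)" unfolding x_def by simp
    fix k assume "k < dim_row A"
    then have k: "k < m" by simp
    have "(A *\<^sub>v x t) $ k = (\<Sum>i<n. A $$ (k,i) * (X $$ (i,0) + t * d i))"
      using k unfolding x_def by (simp add: scalar_prod_def atLeast0LessThan)
    also have "\<dots> = ax X k 0 + t * dot k d"
      unfolding ax_def dot_def by (simp add: algebra_simps sum.distrib sum_distrib_left)
    finally have eq: "(A *\<^sub>v x t) $ k = ax X k 0 + t * dot k d" .
    have "lnn (Suc m) (res X k)" using bI k unfolding basis_def lfeas_def by auto
    then have "res X k 0 \<ge> 0" using lnn_0 by blast
    then have "ax X k 0 \<ge> b $ k" unfolding res_def Bt_def by simp
    moreover have "t * dot k d \<ge> 0" using t nn[OF k] by simp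
    ultimately show "b $ k \<le> (A *\<^sub>v x t) $ k" unfolding eq by simp
  qed
  define t where "t = (\<bar>M\<bar> + \<bar>X $$ (r,0)\<bar> + 1) / \<bar>d r\<bar>"
  have t0: "t \<ge> 0" unfolding t_def by simp
  have "\<bar>x t $ r\<bar> \<le> M" using M[OF inP[OF t0], of r] r unfolding x_def by simp
  moreover have "x t $ r = X $$ (r,0) + t * d r" using r unfolding x_def by simp
  moreover have "\<bar>t * d r\<bar> = \<bar>M\<bar> + \<bar>X $$ (r,0)\<bar> + 1"
    unfolding t_def using dr by (simp add: abs_mult)
  ultimately show False by linarith
qed

end
context setting begin

definition obj :: "nat set \<Rightarrow> nat set \<Rightarrow> nat \<Rightarrow> real" where
  "obj J K c = (\<Sum>jj\<in>J. ax (basis_sol A b K) jj c)"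

lemma diff_rep: assumes tbI: "tb I X" and tbJ: "tb J XJ" and c: "c < Suc m"
  shows "ax XJ jj c - ax X jj c = (\<Sum>i\<in>I. dot jj (dir X i) * res XJ i c)"
proof -
  have X: "X \<in> carrier_mat n (Suc m)" and XJ: "XJ \<in> carrier_mat n (Suc m)"
    using tbI tbJ unfolding tb_def by auto
  have I: "I \<subseteq> {..<m}" using tbI unfolding tb_def by auto
  have d: "XJ $$ (r,c) - X $$ (r,c) = (\<Sum>i\<in>I. dir X i r * res XJ i c)" if r: "r < n" for r
  proof -
    have "XJ $$ (r,c) - X $$ (r,c) = (\<Sum>i\<in>I. dir X i r * ax XJ i c) - (\<Sum>i\<in>I. dir X i r * ax X i c)"
      using REP[OF tbI XJ r c] REP[OF tbI X r c] by simp
    also have "\<dots> = (\<Sum>i\<in>I. dir X i r * (ax XJ i c - ax X i c))"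
      by (simp add: sum_subtractf right_diff_distrib)
    also have "\<dots> = (\<Sum>i\<in>I. dir X i r * res XJ i c)"
      using tb_ax[OF tbI _ c] unfolding res_def by (intro sum.cong) auto
    finally show ?thesis .
  qed
  have "ax XJ jj c - ax X jj c = (\<Sum>r<n. A $$ (jj,r) * (XJ $$ (r,c) - X $$ (r,c)))"
    unfolding ax_def by (simp add: sum_subtractf right_diff_distrib)
  also have "\<dots> = (\<Sum>r<n. A $$ (jj,r) * (\<Sum>i\<in>I. dir X i r * res XJ i c))"
    using d by (intro sum.cong) auto
  also have "\<dots> = (\<Sum>r<n. \<Sum>i\<in>I. A $$ (jj,r) * dir X i r * res XJ i c)"
    by (simp add: sum_distrib_left mult.assoc)
  also have "\<dots> = (\<Sum>i\<in>I. \<Sum>r<n. A $$ (jj,r) * dir X i r * res XJ i c)" by (rule sum.swap)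
  also have "\<dots> = (\<Sum>i\<in>I. dot jj (dir X i) * res XJ i c)"
    unfolding dot_def by (simp add: sum_distrib_right)
  finally show ?thesis .
qed

lemma IMP: assumes poly: "is_polytope (polyhedron A b)"
  and lfI: "lex_feasible_basis A b I" and lfJ: "lex_feasible_basis A b J" and ne: "I \<noteq> J"
  shows "\<exists>I'. (I, I') \<in> lex_edges A b \<and> lpos (Suc m) (\<lambda>c. obj J I c - obj J I' c)"
proof -
  let ?N = "Suc m"
  define X where "X = basis_sol A b I"
  define XJ where "XJ = basis_sol A b J"
  have bI: "basis I X" unfolding X_def using LF'[OF lfI] .
  have bJ: "basis J XJ" unfolding XJ_def using LF'[OF lfJ] .
  have tbI: "tb I X" and tbJ: "tb J XJ" using bI bJ basis_tb by auto
  have I: "I \<subseteq> {..<m}" "card I = n" and J: "J \<subseteq> {..<m}" "card J = n"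
    using bI bJ unfolding basis_def by auto
  have fI: "finite I" and fJ: "finite J" using I J finite_subset by auto
  have Xc: "X \<in> carrier_mat n ?N" using bI unfolding basis_def by auto
  define \<gamma> where "\<gamma> i = (\<Sum>jj\<in>J. dot jj (dir X i))" for i
  have lXJ: "lnn ?N (res XJ k)" if "k < m" for k using bJ that unfolding basis_def lfeas_def by auto
  have lX: "lnn ?N (res X k)" if "k < m" for k using bI that unfolding basis_def lfeas_def by auto
  have "\<exists>i\<in>I. \<gamma> i < 0"
  proof (rule ccontr)
    assume "\<not> ?thesis"
    then have g: "\<And>i. i \<in> I \<Longrightarrow> \<gamma> i \<ge> 0" by force
    have S1: "obj J I c - obj J J c = (\<Sum>jj\<in>J. res X jj c)" if c: "c < ?N" for c
    proof -
      have "obj J J c = (\<Sum>jj\<in>J. Bt jj c)" unfolding obj_def XJ_def[symmetric]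
        using tb_ax[OF tbJ _ c] by (intro sum.cong) auto
      then show ?thesis unfolding obj_def X_def[symmetric] res_def by (simp add: sum_subtractf)
    qed
    have S2: "obj J J c - obj J I c = (\<Sum>i\<in>I. \<gamma> i * res XJ i c)" if c: "c < ?N" for c
    proof -
      have "obj J J c - obj J I c = (\<Sum>jj\<in>J. ax XJ jj c - ax X jj c)"
        unfolding obj_def X_def[symmetric] XJ_def[symmetric] by (simp add: sum_subtractf)
      also have "\<dots> = (\<Sum>jj\<in>J. \<Sum>i\<in>I. dot jj (dir X i) * res XJ i c)"
        using diff_rep[OF tbI tbJ c] by simp
      also have "\<dots> = (\<Sum>i\<in>I. \<Sum>jj\<in>J. dot jj (dir X i) * res XJ i c)" by (rule sum.swap)
      also have "\<dots> = (\<Sum>i\<in>I. \<gamma> i * res XJ i c)" unfolding \<gamma>_def by (simp add: sum_distrib_right)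
      finally show ?thesis .
    qed
    have "lnn ?N (\<lambda>c. \<Sum>i\<in>I. \<gamma> i * res XJ i c)"
      using fI by (rule lnn_sum) (use lnn_smult lXJ g I in auto)
    then have L2: "lnn ?N (\<lambda>c. - (\<Sum>jj\<in>J. res X jj c))"
      by (rule lnn_cong) (use S1 S2 in force)
    have L1: "lnn ?N (\<lambda>c. \<Sum>jj\<in>J. res X jj c)"
      using fJ by (rule lnn_sum) (use lX J in auto)
    have z: "\<forall>c<?N. (\<Sum>jj\<in>J. res X jj c) = 0" using lnn_antisym[OF L1 L2] .
    have "J \<subseteq> I"
    proof
      fix j assume j: "j \<in> J"
      have "\<forall>c<?N. res X j c = 0" using lnn_sum_zero[OF fJ _ _ j, of ?N "res X"] lX J z by auto
      moreover have "j < m" using j J by auto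
      ultimately show "j \<in> I" using res_jj[OF tbI] by (metis Suc_less_eq zero_neq_one)
    qed
    then have "J = I" using card_subset_eq[OF fI] I J by simp
    then show False using ne by simp
  qed
  then obtain i where i: "i \<in> I" and gi: "\<gamma> i < 0" by blast
  define d where "d = dir X i"
  have dk: "\<And>k. k \<in> I \<Longrightarrow> dot k d = (if k = i then 1 else 0)"
    using core1[of I X _ i] tbI i unfolding tb_def d_def by auto
  define Neg where "Neg = {k. k < m \<and> dot k d < 0}"
  have "Neg \<noteq> {}"
  proof
    assume "Neg = {}"
    then have nn: "\<And>k. k < m \<Longrightarrow> dot k d \<ge> 0" unfolding Neg_def by force
    have "\<exists>r<n. d r \<noteq> 0"
    proof (rule ccontr)
      assume "\<not> ?thesis"
      then have "dot i d = 0" unfolding dot_def by simp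
      then show False using dk[OF i] by simp
    qed
    then show False using BND[OF poly bI nn] by blast
  qed
  moreover have "finite Neg" unfolding Neg_def by simp
  ultimately obtain j where j: "j \<in> Neg"
    and jmin: "\<And>k. k \<in> Neg \<Longrightarrow> lnn ?N (\<lambda>c. res X k c / (- dot k d) - res X j c / (- dot j d))"
    using lex_min_exists[of Neg ?N "\<lambda>k c. res X k c / (- dot k d)"] by blast
  have jm: "j < m" and dj: "dot j d < 0" using j unfolding Neg_def by auto
  have jI: "j \<notin> I"
  proof
    assume "j \<in> I"
    then have "dot j d = (if j = i then 1 else 0)" using dk by blast
    then show False using dj by (simp split: if_splits)
  qed
  define \<theta> where "\<theta> c = res X j c / (- dot j d)" for c
  define X' where "X' = piv X d \<theta>"
  define I' where "I' = insert j (I - {i})"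
  have rX': "res X' k c = res X k c + dot k d * \<theta> c" if "c < ?N" for k c
    unfolding X'_def using res_piv[OF that] .
  have thpos: "lpos ?N \<theta>"
  proof -
    have "lpos ?N (res X j)" using lX[OF jm] res_jj[OF tbI jm jI] jm unfolding lnn_def
      by (metis Suc_less_eq zero_neq_one)
    then have "lpos ?N (\<lambda>c. (1 / (- dot j d)) * res X j c)" by (rule lpos_smult) (use dj in simp)
    then show ?thesis unfolding \<theta>_def by simp
  qed
  have thnn: "lnn ?N \<theta>" using thpos unfolding lnn_def by simp
  have n1: "n \<ge> 1" using i I fI by (metis card_0_eq empty_iff less_one not_le)
  have bI': "basis I' X'"
    unfolding basis_def
  proof (intro conjI)
    show "I' \<subseteq> {..<m}" unfolding I'_def using I jm by auto
    show "card I' = n" unfolding I'_def using fI jI i I n1 by (simp add: card_insert_if)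
    show "X' \<in> carrier_mat n ?N" unfolding X'_def by (rule piv_carrier)
    show "tight I' X'" unfolding tight_def
    proof (intro ballI allI impI)
      fix k c assume k: "k \<in> I'" and c: "c < ?N"
      show "res X' k c = 0"
      proof (cases "k = j")
        case True then show ?thesis unfolding rX'[OF c] \<theta>_def using dj by simp
      next
        case False
        then have "k \<in> I" "k \<noteq> i" using k unfolding I'_def by auto
        then show ?thesis unfolding rX'[OF c] using dk tb_ax[OF tbI _ c] unfolding res_def by simp
      qed
    qed
    show "lfeas X'" unfolding lfeas_def
    proof (intro allI impI)
      fix k assume k: "k < m"
      show "lnn ?N (res X' k)"
      proof (cases "dot k d \<ge> 0")
        case True
        have "lnn ?N (\<lambda>c. res X k c + dot k d * \<theta> c)" using lnn_add[OF lX[OF k] lnn_smult[OF thnn True]] .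
        then show ?thesis by (rule lnn_cong) (use rX' in simp)
      next
        case False
        then have "k \<in> Neg" unfolding Neg_def using k by simp
        then have "lnn ?N (\<lambda>c. (- dot k d) * (res X k c / (- dot k d) - res X j c / (- dot j d)))"
          by (rule lnn_smult[OF jmin]) (use False \<open>k \<in> Neg\<close> in auto)
        then show ?thesis
        proof (rule lnn_cong)
          fix c assume c: "c < ?N"
          show "(- dot k d) * (res X k c / (- dot k d) - res X j c / (- dot j d)) = res X' k c"
            unfolding rX'[OF c] \<theta>_def using False by (simp add: field_simps)
        qed
      qed
    qed
  qed
  have lf': "lex_feasible_basis A b I'" and sol': "basis_sol A b I' = X'" using LF[OF bI'] by auto
  have "I \<inter> I' = I - {i}" unfolding I'_def using jI by auto
  then have "card (I \<inter> I') = n - 1" using i I fI by simp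
  then have edge: "(I, I') \<in> lex_edges A b"
    unfolding lex_edges_def lex_vertices_def using lfI lf' n1 by simp
  have "obj J I c - obj J I' c = (- \<gamma> i) * \<theta> c" if c: "c < ?N" for c
  proof -
    have "obj J I' c = (\<Sum>jj\<in>J. ax X jj c + dot jj d * \<theta> c)"
      unfolding obj_def sol' X'_def using ax_piv[OF c] by simp
    also have "\<dots> = obj J I c + \<gamma> i * \<theta> c"
      unfolding obj_def X_def[symmetric] \<gamma>_def d_def by (simp add: sum.distrib sum_distrib_right)
    finally show ?thesis by simp
  qed
  moreover have "lpos ?N (\<lambda>c. (- \<gamma> i) * \<theta> c)" by (rule lpos_smult[OF thpos]) (use gi in simp)
  ultimately have "lpos ?N (\<lambda>c. obj J I c - obj J I' c)" using lpos_cong by (metis (no_types, lifting))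
  then show ?thesis using edge by blast
qed

end


theorem mainTheorem6:
  fixes A :: "real mat" and b :: "real vec" and m n :: nat
    and V :: "(nat set \<times> real mat) set"
    and E :: "((nat set \<times> real mat) \<times> (nat set \<times> real mat)) set"
  assumes A: "A \<in> carrier_mat m n" and b: "b \<in> carrier_vec m"
    and poly: "is_polytope (polyhedron A b)"
    and graph: "fin_undirected_graph V E"
    and nonempty: "V \<noteq> {}"
    and vert: "\<And>I X. (I, X) \<in> V \<Longrightarrow> I \<subseteq> {..<m} \<and> X \<in> carrier_mat n (1 + m)"
    and card_I: "\<And>I X. (I, X) \<in> V \<Longrightarrow> card I = n"
    and eq_I: "\<And>I X. (I, X) \<in> V \<Longrightarrow> rows_sub A I * X = rows_sub (btilde b) I"
    and lex: "\<And>I X. (I, X) \<in> V \<Longrightarrow> mat_lex_ge (A * X) (btilde b)"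
    and deg: "\<And>u. u \<in> V \<Longrightarrow> card {u'. (u, u') \<in> E} = n"
    and adj: "\<And>I X I' X'. ((I, X), (I', X')) \<in> E \<Longrightarrow> int (card (I \<inter> I')) = int n - 1"
  shows "graph_iso fst V E (lex_vertices A b) (lex_edges A b)"
proof -
  interpret setting A b m n using A b by unfold_locales
  have finV: "finite V" and EV: "E \<subseteq> V \<times> V" using graph unfolding fin_undirected_graph_def by auto
  have basisV: "basis (fst u) (snd u)" if u: "u \<in> V" for u
  proof -
    obtain I X where uIX: "u = (I, X)" by (cases u)
    have IX: "(I, X) \<in> V" using u uIX by simp
    have I: "I \<subseteq> {..<m}" and X: "X \<in> carrier_mat n (Suc m)" using vert[OF IX] by auto
    show ?thesis unfolding uIX basis_def using I X card_I[OF IX] E1[OF I X] eq_I[OF IX] E2[OF X] lex[OF IX]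
      by simp
  qed
  have lfV: "fst u \<in> lex_vertices A b" "basis_sol A b (fst u) = snd u" if "u \<in> V" for u
    using LF[OF basisV[OF that]] unfolding lex_vertices_def by auto
  have inj: "inj_on fst V"
  proof
    fix u v assume "u \<in> V" "v \<in> V" "fst u = fst v"
    then show "u = v" using lfV(2) by (metis prod.expand)
  qed
  have fwd: "(fst u, fst v) \<in> lex_edges A b" if "u \<in> V" "v \<in> V" "(u, v) \<in> E" for u v
  proof -
    obtain I X where u: "u = (I, X)" by (cases u)
    obtain I' X' where v: "v = (I', X')" by (cases v)
    show ?thesis using adj[of I X I' X'] that lfV u v unfolding lex_edges_def by auto
  qed
  have finLV: "finite (lex_vertices A b)"
  proof (rule finite_subset)
    show "lex_vertices A b \<subseteq> Pow {..<m}"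
      unfolding lex_vertices_def lex_feasible_basis_def by auto
  qed simp
  have nbr: "{I'. (fst u, I') \<in> lex_edges A b} = fst ` {u'. (u, u') \<in> E}" if u: "u \<in> V" for u
  proof -
    let ?L = "{I'. (fst u, I') \<in> lex_edges A b}"
    let ?G = "{u'. (u, u') \<in> E}"
    have GV: "?G \<subseteq> V" using EV by auto
    have sub: "fst ` ?G \<subseteq> ?L"
    proof
      fix x assume "x \<in> fst ` ?G"
      then obtain w where w: "(u, w) \<in> E" "x = fst w" by auto
      then have "w \<in> V" using GV by auto
      then show "x \<in> ?L" using fwd[OF u _ w(1)] w(2) by simp
    qed
    have finL: "finite ?L"
      by (rule finite_subset[OF _ finLV]) (auto simp: lex_edges_def)
    have "card (fst ` ?G) = n" using card_image[OF inj_on_subset[OF inj GV]] deg[OF u] by simp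
    moreover have "card ?L \<le> n" using DEG lfV(1)[OF u] unfolding lex_vertices_def by auto
    moreover have "card (fst ` ?G) \<le> card ?L" using card_mono[OF finL sub] .
    ultimately have "card (fst ` ?G) = card ?L" by simp
    then show ?thesis using card_subset_eq[OF finL sub] by simp
  qed
  have bwd: "(u, v) \<in> E" if "u \<in> V" "v \<in> V" "(fst u, fst v) \<in> lex_edges A b" for u v
  proof -
    have "fst v \<in> fst ` {u'. (u, u') \<in> E}" using nbr[OF that(1)] that(3) by blast
    then obtain w where w: "(u, w) \<in> E" "fst w = fst v" by auto
    have "w \<in> V" using w EV by auto
    then have "w = v" using inj w that(2) unfolding inj_on_def by auto
    then show ?thesis using w by simp
  qed
  define S where "S = fst ` V"
  have closed: "I' \<in> S" if IS0: "I \<in> S" and e0: "(I, I') \<in> lex_edges A b" for I I'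
  proof -
    obtain u where u: "u \<in> V" "I = fst u" using IS0 unfolding S_def by blast
    then have "I' \<in> fst ` {u'. (u, u') \<in> E}" using nbr[OF u(1)] e0 by blast
    then show ?thesis unfolding S_def using EV by auto
  qed
  have surj: "lex_vertices A b \<subseteq> S"
  proof
    fix J assume J: "J \<in> lex_vertices A b"
    then have lfJ: "lex_feasible_basis A b J" unfolding lex_vertices_def by simp
    show "J \<in> S"
    proof (rule ccontr)
      assume JS: "J \<notin> S"
      define r where "r = {(I', I). I \<in> S \<and> I' \<in> S \<and> lpos (Suc m) (\<lambda>c. obj J I c - obj J I' c)}"
      have finS: "finite S" unfolding S_def using finV by simp
      have finr: "finite r" by (rule finite_subset[of _ "S \<times> S"]) (auto simp: r_def finS)
      have trans: "trans r"
      proof (rule transI)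
        fix x y z assume "(x, y) \<in> r" "(y, z) \<in> r"
        then have "x \<in> S" "z \<in> S" and p1: "lpos (Suc m) (\<lambda>c. obj J y c - obj J x c)"
          and p2: "lpos (Suc m) (\<lambda>c. obj J z c - obj J y c)" unfolding r_def by auto
        have "lpos (Suc m) (\<lambda>c. (obj J z c - obj J y c) + (obj J y c - obj J x c))"
          using lpos_add[OF p2] p1 unfolding lnn_def by blast
        then have "lpos (Suc m) (\<lambda>c. obj J z c - obj J x c)" by simp
        then show "(x, z) \<in> r" using \<open>x \<in> S\<close> \<open>z \<in> S\<close> unfolding r_def by auto
      qed
      have irr: "(x, x) \<notin> r" for x unfolding r_def lpos_def by auto
      have "acyclic r" unfolding acyclic_def using trancl_id[OF trans] irr by simp
      then have wf: "wf r" using finite_acyclic_wf[OF finr] by simp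
      obtain u0 where "u0 \<in> V" using nonempty by auto
      then have "fst u0 \<in> S" unfolding S_def by simp
      then obtain I where IS: "I \<in> S" and min: "\<And>y. (y, I) \<in> r \<Longrightarrow> y \<notin> S"
        using wfE_min[OF wf] by metis
      have lfI: "lex_feasible_basis A b I" using IS lfV(1) unfolding S_def lex_vertices_def by auto
      have "I \<noteq> J" using IS JS by auto
      then obtain I' where e: "(I, I') \<in> lex_edges A b" and p: "lpos (Suc m) (\<lambda>c. obj J I c - obj J I' c)"
        using IMP[OF poly lfI lfJ] by blast
      have "I' \<in> S" using closed[OF IS e] .
      then have "(I', I) \<in> r" unfolding r_def using IS p by auto
      then show False using min \<open>I' \<in> S\<close> by blast
    qed
  qed
  have img: "fst ` V = lex_vertices A b" using surj lfV(1) unfolding S_def by auto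
  show ?thesis unfolding graph_iso_def bij_betw_def
    using inj img fwd bwd by blast
qed

end
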